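(* For Lebesgue almost every angle $\alpha\in\mathbb{T}$ the following two properties hold simultaneously: (1) for every irrational point $\xi\in\alpha+K$, one has $2\leq\mu(\xi)\leq\frac{2}{1-\kappa}$; (2) for every real number $\mu\in[2,2/(1-\kappa)]$, one has $\dim_H(\mathcal{M}(\mu)\cap(\alpha+K))\leq\frac{2}{\mu}+\kappa-1$.
   Context: $\mathbb{T}=\mathbb{R}/\mathbb{Z}$ is the circle with the usual quotient distance $d$, identified with $[0,1)$. $K$ denotes the image in $\mathbb{T}$ of the middle-third Cantor set $\{\sum_{i\ge1}a_i3^{-i}: a_i\in\{0,2\}\}$, and $\kappa=\log 2/\log 3$. For $\alpha\in\mathbb{T}$, $\alpha+K$ is the image of $K$ under the rotation by $\alpha$. Let $\mathcal{P}$ be the set of pairs $(p,q)$ of integers with $0\le p<q$ and $\gcd(p,q)=1$. For an irrational $\xi\in\mathbb{T}$, its irrationality exponent is $\mu(\xi)=\sup\{\mu\in\mathbb{R}: d(\xi,p/q)<q^{-\mu}\text{ for infinitely many }(p,q)\in\mathcal{P}\}$; for rational $\xi$, $\mu(\xi)=1$. For $\mu\ge2$, $\mathcal{M}(\mu)=\{\xi\in\mathbb{T}:\mu(\xi)\geq\mu\}$. $\dim_H$ denotes Hausdorff dimension, with the convention $\dim_H\emptyset=-\infty$. *)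

theory Defs
  imports "HOL-Analysis.Analysis"
begin

text \<open>The circle T = R/Z is represented by [0,1); tdist is the quotient distance.\<close>
definition tdist :: "real \<Rightarrow> real \<Rightarrow> real" where
  "tdist x y = \<bar>(x - y) - of_int (round (x - y))\<bar>"

definition tdiam :: "real set \<Rightarrow> real" where
  "tdiam U = (if U = {} then 0 else Sup {tdist x y | x y. x \<in> U \<and> y \<in> U})"

definition hausdorff_meas :: "real \<Rightarrow> real set \<Rightarrow> ennreal" where
  "hausdorff_meas s A =
     (SUP \<delta>\<in>{0<..}. INF U\<in>{U :: nat \<Rightarrow> real set.
          A \<subseteq> (\<Union>i. U i) \<and> (\<forall>i. tdiam (U i) \<le> \<delta>)}.
        (\<Sum>i. ennreal (tdiam (U i) powr s)))"

definition hdim :: "real set \<Rightarrow> ereal" where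
  "hdim A = (if A = {} then - \<infinity>
             else ereal (Inf {s::real. s > 0 \<and> hausdorff_meas s A = 0}))"

definition cantorK :: "real set" where
  "cantorK = {frac (\<Sum>i. real (a i) / 3 ^ Suc i) | a :: nat \<Rightarrow> nat. \<forall>i. a i \<in> {0, 2}}"

definition kappa :: real where
  "kappa = ln 2 / ln 3"

definition rot :: "real \<Rightarrow> real set \<Rightarrow> real set" where
  "rot \<alpha> S = (\<lambda>x. frac (\<alpha> + x)) ` S"

definition irr_exp :: "real \<Rightarrow> ereal" where
  "irr_exp \<xi> = (if \<xi> \<in> \<rat> then 1
     else Sup {ereal \<mu> | \<mu>. infinite {(p :: int, q :: int).
              0 \<le> p \<and> p < q \<and> coprime p q \<and>
              tdist \<xi> (of_int p / of_int q) < of_int q powr (- \<mu>)}})"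

definition Mset :: "real \<Rightarrow> real set" where
  "Mset \<mu> = {\<xi>. 0 \<le> \<xi> \<and> \<xi> < 1 \<and> irr_exp \<xi> \<ge> ereal \<mu>}"

end

theory Submission
  imports Defs "HOL-Analysis.Kronecker_Approximation_Theorem"
begin


lemma tdist_nonneg: "tdist x y \<ge> 0" by (simp add: tdist_def)

lemma round_dist_le: "\<bar>(t::real) - of_int (round t)\<bar> \<le> \<bar>t - of_int (k::int)\<bar>"
proof -
  have r1: "of_int (round t) \<le> t + 1/2" "t - 1/2 < of_int (round t)"
    using of_int_round_le[of t] of_int_round_gt[of t] by auto
  show ?thesis
  proof (cases "k = round t")
    case True then show ?thesis by simp
  next
    case False
    then have "k \<ge> round t + 1 \<or> k \<le> round t - 1" by linarith
    then have "of_int k \<ge> of_int (round t) + (1::real) \<or> of_int k \<le> of_int (round t) - (1::real)"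
      by (metis of_int_add of_int_diff of_int_le_iff of_int_1)
    then show ?thesis using r1 by linarith
  qed
qed

lemma tdist_le: "tdist x y \<le> \<bar>x - y - of_int k\<bar>"
  unfolding tdist_def by (rule round_dist_le)

lemma tdist_ex: "\<exists>k::int. tdist x y = \<bar>x - y - of_int k\<bar>"
  unfolding tdist_def by blast

lemma tdist_triangle: "tdist x z \<le> tdist x y + tdist y z"
proof -
  obtain k1 where k1: "tdist x y = \<bar>x - y - of_int k1\<bar>" using tdist_ex by blast
  obtain k2 where k2: "tdist y z = \<bar>y - z - of_int k2\<bar>" using tdist_ex by blast
  have "tdist x z \<le> \<bar>x - z - of_int (k1 + k2)\<bar>" by (rule tdist_le)
  also have "\<dots> \<le> \<bar>x - y - of_int k1\<bar> + \<bar>y - z - of_int k2\<bar>" by simp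
  finally show ?thesis using k1 k2 by simp
qed

lemma tdist_sym: "tdist x y = tdist y x"
proof -
  obtain k where k: "tdist x y = \<bar>x - y - of_int k\<bar>" using tdist_ex by blast
  obtain k' where k': "tdist y x = \<bar>y - x - of_int k'\<bar>" using tdist_ex by blast
  have "tdist y x \<le> \<bar>y - x - of_int (-k)\<bar>" by (rule tdist_le)
  moreover have "tdist x y \<le> \<bar>x - y - of_int (-k')\<bar>" by (rule tdist_le)
  ultimately show ?thesis using k k' by simp
qed

lemma tdist_le_abs: "tdist x y \<le> \<bar>x - y\<bar>"
  using tdist_le[of x y 0] by simp

lemma tdist_half: "tdist x y \<le> 1/2"
  unfolding tdist_def using of_int_round_le[of "x-y"] of_int_round_gt[of "x-y"] by linarith


primrec Cset :: "nat \<Rightarrow> real set" where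
  "Cset 0 = {0}"
| "Cset (Suc n) = Cset n \<union> (\<lambda>c. c + 2 / 3 ^ Suc n) ` Cset n"

lemma Cset_finite: "finite (Cset n)"
  by (induction n) auto

lemma Cset_card: "card (Cset n) \<le> 2 ^ n"
proof (induction n)
  case 0 then show ?case by simp
next
  case (Suc n)
  have "card (Cset (Suc n)) \<le> card (Cset n) + card ((\<lambda>c. c + 2 / 3 ^ Suc n) ` Cset n)"
    by (simp add: card_Un_le)
  also have "\<dots> \<le> card (Cset n) + card (Cset n)"
    using card_image_le[OF Cset_finite] by simp
  finally show ?case using Suc by simp
qed

lemma Cset_mem:
  assumes "\<forall>i. a i \<in> {0, 2::nat}"
  shows "(\<Sum>i<n. real (a i) / 3 ^ Suc i) \<in> Cset n"
proof (induction n)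
  case 0 then show ?case by simp
next
  case (Suc n)
  have "a n = 0 \<or> a n = 2" using assms by auto
  then show ?case using Suc by (auto simp: lessThan_Suc)
qed

lemma Cset_range: "c \<in> Cset n \<Longrightarrow> 0 \<le> c \<and> c \<le> 1 - 1/3^n"
proof (induction n arbitrary: c)
  case 0 then show ?case by simp
next
  case (Suc n)
  show ?case
  proof (cases "c \<in> Cset n")
    case True
    then show ?thesis using Suc.IH[of c] by (auto simp: field_simps)
  next
    case False
    then obtain d where d: "d \<in> Cset n" "c = d + 2 / 3 ^ Suc n" using Suc.prems by auto
    have e1: "2 / 3^Suc n = 2/3 * (1/(3::real)^n)" "1 / 3^Suc n = 1/3 * (1/(3::real)^n)" by simp_all
    have "0 < 1/(3::real)^n" by simp
    then show ?thesis using Suc.IH[OF d(1)] d(2) e1 by linarith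
  qed
qed

lemma cantor_summable:
  assumes "\<forall>i. a i \<in> {0, 2::nat}"
  shows "summable (\<lambda>i. real (a i) / 3 ^ Suc i)"
proof (rule summable_comparison_test[where g = "\<lambda>i. 2 * (1/3)^i"])
  show "summable (\<lambda>i. 2 * (1/3::real)^i)" by (intro summable_mult summable_geometric) simp
  show "\<exists>N. \<forall>n\<ge>N. norm (real (a n) / 3 ^ Suc n) \<le> 2 * (1 / 3) ^ n"
  proof (intro exI allI impI)
    fix n
    have "real (a n) \<le> 2" using assms by (metis empty_iff insert_iff of_nat_numeral order.refl zero_le_numeral of_nat_0)
    then have "real (a n) / 3 ^ Suc n \<le> 2 / 3 ^ Suc n" by (simp add: divide_right_mono)
    also have "\<dots> \<le> 2 * (1/3)^n" by (simp add: power_one_over field_simps)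
    finally show "norm (real (a n) / 3 ^ Suc n) \<le> 2 * (1 / 3) ^ n" by simp
  qed
qed

lemma cantor_tail:
  assumes a: "\<forall>i. a i \<in> {0, 2::nat}"
  shows "0 \<le> (\<Sum>i. real (a i) / 3 ^ Suc i) - (\<Sum>i<n. real (a i) / 3 ^ Suc i)
         \<and> (\<Sum>i. real (a i) / 3 ^ Suc i) - (\<Sum>i<n. real (a i) / 3 ^ Suc i) \<le> 1 / 3 ^ n"
proof -
  let ?f = "\<lambda>i. real (a i) / 3 ^ Suc i"
  have s: "summable ?f" by (rule cantor_summable[OF a])
  have eq: "(\<Sum>i. ?f i) - (\<Sum>i<n. ?f i) = (\<Sum>i. ?f (i + n))"
    using suminf_split_initial_segment[OF s, of n] by simp
  have s2: "summable (\<lambda>i. ?f (i + n))" using summable_ignore_initial_segment[OF s, of n] by simp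
  have le2: "?f (i + n) \<le> (2 / 3^Suc n) * (1/3)^i" for i
  proof -
    have "real (a (i+n)) \<le> 2" using a by (metis empty_iff insert_iff of_nat_numeral order.refl zero_le_numeral of_nat_0)
    then have "?f (i+n) \<le> 2 / 3 ^ Suc (i+n)" by (simp add: divide_right_mono)
    also have "\<dots> = (2 / 3^Suc n) * (1/3)^i" by (simp add: power_add power_one_over field_simps)
    finally show ?thesis .
  qed
  have g: "(\<lambda>i. (2 / 3^Suc n) * (1/3::real)^i) sums ((2 / 3^Suc n) * (1 / (1 - 1/3)))"
    by (intro sums_mult geometric_sums) simp
  have "(\<Sum>i. ?f (i + n)) \<le> (2 / 3^Suc n) * (1 / (1 - 1/3))"
    using suminf_le[OF le2 s2 sums_summable[OF g]] sums_unique[OF g] by simp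
  also have "\<dots> = 1 / 3^n" by (simp add: field_simps)
  finally have "(\<Sum>i. ?f (i + n)) \<le> 1/3^n" .
  moreover have "0 \<le> (\<Sum>i. ?f (i + n))" by (intro suminf_nonneg s2) simp
  ultimately show ?thesis using eq by simp
qed

lemma cantorK_approx:
  assumes "x \<in> cantorK"
  shows "\<exists>c\<in>Cset n. \<exists>k::int. \<bar>x - c - of_int k\<bar> \<le> 1 / 3 ^ n"
proof -
  obtain a where a: "\<forall>i. a i \<in> {0, 2::nat}" and x: "x = frac (\<Sum>i. real (a i) / 3 ^ Suc i)"
    using assms unfolding cantorK_def by blast
  define S where "S = (\<Sum>i. real (a i) / 3 ^ Suc i)"
  define c where "c = (\<Sum>i<n. real (a i) / 3 ^ Suc i)"
  have c: "c \<in> Cset n" unfolding c_def by (rule Cset_mem[OF a])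
  have t: "0 \<le> S - c \<and> S - c \<le> 1/3^n" unfolding S_def c_def by (rule cantor_tail[OF a])
  have "x = S - of_int (floor S)" using x by (simp add: S_def frac_def)
  then have "\<bar>x - c - of_int (- floor S)\<bar> \<le> 1/3^n" using t by simp
  then show ?thesis using c by blast
qed


lemma tdist_shift_both: "tdist (x - c) (y - c) = tdist x y"
  by (simp add: tdist_def)

lemma rot_cantor_approx:
  assumes "\<xi> \<in> rot \<alpha> cantorK" "tdist \<xi> y < r"
  shows "\<exists>c\<in>Cset n. tdist \<alpha> (y - c) < r + 1/3^n"
proof -
  obtain x where x: "x \<in> cantorK" "\<xi> = frac (\<alpha> + x)" using assms(1) unfolding rot_def by blast
  obtain c k where c: "c \<in> Cset n" "\<bar>x - c - of_int k\<bar> \<le> 1 / 3 ^ n"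
    using cantorK_approx[OF x(1)] by blast
  have "tdist \<alpha> (\<xi> - c) \<le> \<bar>\<alpha> - (\<xi> - c) - of_int (floor (\<alpha> + x) - k)\<bar>" by (rule tdist_le)
  also have "\<alpha> - (\<xi> - c) - of_int (floor (\<alpha> + x) - k) = - (x - c - of_int k)"
    using x(2) by (simp add: frac_def)
  finally have 1: "tdist \<alpha> (\<xi> - c) \<le> 1/3^n" using c(2) by simp
  have "tdist \<alpha> (y - c) \<le> tdist \<alpha> (\<xi> - c) + tdist (\<xi> - c) (y - c)" by (rule tdist_triangle)
  also have "\<dots> < r + 1/3^n" using 1 assms(2) tdist_shift_both[of \<xi> c y] by simp
  finally show ?thesis using c(1) by blast
qed

definition nn :: "real \<Rightarrow> nat \<Rightarrow> nat" where
  "nn \<mu> q = nat \<lceil>\<mu> * log 3 (real q)\<rceil>"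

definition rho :: "real \<Rightarrow> nat \<Rightarrow> real" where
  "rho \<mu> q = real q powr (-\<mu>) + 1 / 3 ^ nn \<mu> q"

definition Eset :: "real \<Rightarrow> nat \<Rightarrow> real set" where
  "Eset \<mu> i = (case prod_decode i of (p, q) \<Rightarrow>
     if p < q then (\<Union>c\<in>Cset (nn \<mu> q). \<Union>k\<in>{-2..3::int}.
        {real p / real q - c + of_int k - rho \<mu> q <..< real p / real q - c + of_int k + rho \<mu> q})
     else {})"

lemma powr_neg_le_one: "1 \<le> (q::real) \<Longrightarrow> 0 \<le> \<mu> \<Longrightarrow> q powr (-\<mu>) \<le> 1"
proof -
  assume a: "1 \<le> q" "0 \<le> \<mu>"
  have h: "1 \<le> q powr \<mu>" using ge_one_powr_ge_zero[OF a] .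
  then show ?thesis by (metis inverse_1 le_imp_inverse_le powr_minus zero_less_one)
qed

lemma three_pow_nn: 
  assumes "1 \<le> q" "0 \<le> \<mu>"
  shows "real q powr \<mu> \<le> 3 ^ nn \<mu> q" and "3 ^ nn \<mu> q < 3 * real q powr \<mu>"
proof -
  have l: "0 \<le> \<mu> * log 3 (real q)" using assms by simp
  have e: "(3::real) powr (\<mu> * log 3 (real q)) = real q powr \<mu>"
  proof -
    have "(3::real) powr (\<mu> * log 3 (real q)) = (3 powr log 3 (real q)) powr \<mu>"
      by (simp add: powr_powr mult.commute)
    also have "\<dots> = real q powr \<mu>" using assms by simp
    finally show ?thesis .
  qed
  have n1: "\<mu> * log 3 (real q) \<le> real (nn \<mu> q)" unfolding nn_def by linarith
  have n2: "real (nn \<mu> q) < \<mu> * log 3 (real q) + 1" unfolding nn_def using l by linarith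
  have "real q powr \<mu> \<le> 3 powr real (nn \<mu> q)" using e n1 by (metis powr_mono one_le_numeral)
  then show "real q powr \<mu> \<le> 3 ^ nn \<mu> q" by (simp add: powr_realpow)
  have "(3::real) powr real (nn \<mu> q) < 3 powr (\<mu> * log 3 (real q) + 1)" using n2 by simp
  also have "\<dots> = 3 * real q powr \<mu>" using e by (simp add: powr_add)
  finally show "3 ^ nn \<mu> q < 3 * real q powr \<mu>" by (simp add: powr_realpow)
qed

lemma inv_three_pow_nn:
  assumes "1 \<le> q" "0 \<le> \<mu>"
  shows "1 / 3 ^ nn \<mu> q \<le> real q powr (-\<mu>)"
proof -
  have "real q powr \<mu> > 0" using assms by simp
  then show ?thesis using three_pow_nn(1)[OF assms]
    by (simp add: powr_minus divide_simps)
qed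

lemma rho_le: "1 \<le> q \<Longrightarrow> 0 \<le> \<mu> \<Longrightarrow> rho \<mu> q \<le> 2 * real q powr (-\<mu>)"
  using inv_three_pow_nn unfolding rho_def by simp

lemma rho_le2: "1 \<le> q \<Longrightarrow> 0 \<le> \<mu> \<Longrightarrow> rho \<mu> q \<le> 2"
  using rho_le[of q \<mu>] powr_neg_le_one[of "real q" \<mu>] by simp

lemma Eset_mem:
  assumes "\<alpha> \<in> {0..<1}" "p < q" "0 \<le> \<mu>" "c \<in> Cset (nn \<mu> q)"
     "tdist \<alpha> (real p / real q - c) < rho \<mu> q"
  shows "\<alpha> \<in> Eset \<mu> (prod_encode (p, q))"
proof -
  obtain k where k: "tdist \<alpha> (real p / real q - c) = \<bar>\<alpha> - (real p / real q - c) - of_int k\<bar>"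
    using tdist_ex by blast
  have q1: "1 \<le> q" using assms(2) by simp
  have r2: "rho \<mu> q \<le> 2" using rho_le2[OF q1 assms(3)] .
  have "0 < 1/(3::real)^nn \<mu> q" by simp
  then have c01: "0 \<le> c" "c \<le> 1" using Cset_range[OF assms(4)] by linarith+
  have pq: "0 \<le> real p / real q" "real p / real q < 1" using assms(2) by auto
  have b: "\<bar>\<alpha> - (real p / real q - c) - of_int k\<bar> < 2" using k assms(5) r2 by simp
  have "of_int k > (-3::real)" "of_int k < (4::real)" using b pq c01 assms(1) unfolding abs_less_iff atLeastLessThan_iff by linarith+
  then have "k \<in> {-2..3}" by auto
  moreover have "\<alpha> \<in> {real p / real q - c + of_int k - rho \<mu> q <..< real p / real q - c + of_int k + rho \<mu> q}"
    using k assms(5) by auto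
  ultimately show ?thesis using assms(2,4) unfolding Eset_def by (auto intro!: bexI[of _ c] bexI[of _ k])
qed


lemma kappa_pos: "0 < kappa" and kappa_lt1: "kappa < 1"
  unfolding kappa_def by (simp_all add: divide_pos_pos)

lemma three_powr_kappa: "(3::real) powr kappa = 2"
  unfolding kappa_def powr_def by simp

lemma two_pow_nn:
  assumes "1 \<le> q" "0 \<le> \<mu>"
  shows "(2::real) ^ nn \<mu> q \<le> 2 * real q powr (\<mu> * kappa)"
proof -
  have "(2::real) ^ nn \<mu> q = ((3::real) powr kappa) ^ nn \<mu> q" by (simp add: three_powr_kappa)
  also have "\<dots> = (3 ^ nn \<mu> q) powr kappa" by (simp add: powr_realpow[symmetric] powr_powr mult.commute)
  also have "\<dots> \<le> (3 * real q powr \<mu>) powr kappa"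
    using three_pow_nn(2)[OF assms] kappa_pos by (intro powr_mono2) auto
  also have "\<dots> = 2 * real q powr (\<mu> * kappa)"
    using assms by (simp add: powr_mult three_powr_kappa powr_powr)
  finally show ?thesis .
qed

lemma Eset_sets: "Eset \<mu> i \<in> sets lborel"
  unfolding Eset_def by (auto split: prod.split intro!: sets.finite_UN Cset_finite)

lemma Eset_empty: "prod_decode i = (p, q) \<Longrightarrow> \<not> p < q \<Longrightarrow> Eset \<mu> i = {}"
  unfolding Eset_def by simp

lemma Eset_measure:
  assumes "prod_decode i = (p, q)" "p < q" "0 \<le> \<mu>"
  shows "emeasure lborel (Eset \<mu> i) \<le> ennreal (48 * real q powr (-(\<mu> * (1 - kappa))))"
proof -
  let ?C = "Cset (nn \<mu> q)" and ?K = "{-2..3::int}"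
  let ?I = "\<lambda>c k. {real p / real q - c + of_int k - rho \<mu> q <..< real p / real q - c + of_int k + rho \<mu> q}"
  have q1: "1 \<le> q" using assms by simp
  have rpos: "0 < rho \<mu> q" unfolding rho_def using q1 by (simp add: add_pos_nonneg)
  have E: "Eset \<mu> i = (\<Union>c\<in>?C. \<Union>k\<in>?K. ?I c k)" using assms unfolding Eset_def by simp
  have "emeasure lborel (Eset \<mu> i) \<le> (\<Sum>c\<in>?C. emeasure lborel (\<Union>k\<in>?K. ?I c k))"
    unfolding E by (rule emeasure_subadditive_finite) (auto intro!: Cset_finite)
  also have "\<dots> \<le> (\<Sum>c\<in>?C. \<Sum>k\<in>?K. emeasure lborel (?I c k))"
    by (intro sum_mono emeasure_subadditive_finite) auto
  also have "\<dots> = (\<Sum>c\<in>?C. \<Sum>k\<in>?K. ennreal (2 * rho \<mu> q))"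
    using rpos by (intro sum.cong refl) (simp add: emeasure_lborel_Ioo)
  also have "\<dots> = ennreal (real (card ?C) * (6 * (2 * rho \<mu> q)))"
    using rpos by (simp add: ennreal_mult' ennreal_of_nat_eq_real_of_nat)
  also have "\<dots> \<le> ennreal (48 * real q powr (-(\<mu> * (1 - kappa))))"
  proof (rule ennreal_leI)
    have c: "real (card ?C) \<le> 2 * real q powr (\<mu> * kappa)"
    proof -
      have "real (card ?C) \<le> real ((2::nat) ^ nn \<mu> q)" using Cset_card[of "nn \<mu> q"] by (rule of_nat_mono)
      also have "\<dots> = (2::real) ^ nn \<mu> q" by simp
      finally show ?thesis using two_pow_nn[OF q1 assms(3)] by linarith
    qed
    have r: "rho \<mu> q \<le> 2 * real q powr (-\<mu>)" using rho_le[OF q1 assms(3)] .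
    have "real (card ?C) * (6 * (2 * rho \<mu> q)) \<le> (2 * real q powr (\<mu> * kappa)) * (6 * (2 * (2 * real q powr (-\<mu>))))"
      using c r rpos by (intro mult_mono) auto
    also have "\<dots> = 48 * (real q powr (\<mu> * kappa) * real q powr (-\<mu>))" by simp
    also have "real q powr (\<mu> * kappa) * real q powr (-\<mu>) = real q powr (-(\<mu> * (1 - kappa)))"
      by (simp add: powr_add[symmetric] algebra_simps)
    finally show "real (card ?C) * (6 * (2 * rho \<mu> q)) \<le> 48 * real q powr (-(\<mu> * (1 - kappa)))" .
  qed
  finally show ?thesis .
qed


lemma two_triangle: "2 * triangle m = m * Suc m"
  by (induction m) auto

lemma encode_bound:
  assumes "p < q"
  shows "prod_encode (p, q) + 1 \<le> 2 * q^2"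
proof -
  obtain r where r: "q = Suc r" using assms by (cases q) auto
  have pr: "p \<le> r" using assms r by simp
  have m: "p + q \<le> 2 * r + 1" using pr r by simp
  have "(p + q) * Suc (p + q) \<le> (2 * r + 1) * Suc (2 * r + 1)"
    using m by (intro mult_mono) auto
  then have "2 * triangle (p + q) + 2 * p \<le> (2 * r + 1) * (2 * r + 2) + 2 * r"
    using two_triangle[of "p+q"] pr by simp
  then have "2 * (prod_encode (p, q) + 1) \<le> 2 * (2 * q^2)"
    unfolding prod_encode_def r by (simp add: power2_eq_square algebra_simps)
  then show ?thesis by simp
qed


definition wt :: "real \<Rightarrow> real \<Rightarrow> nat \<Rightarrow> real" where
  "wt \<mu> s i = (2 * real (snd (prod_decode i)) powr (-\<mu>)) powr s"

definition Fsum :: "real \<Rightarrow> real \<Rightarrow> real \<Rightarrow> ennreal" where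
  "Fsum \<mu> s \<alpha> = (\<Sum>i. ennreal (wt \<mu> s i) * indicator (Eset \<mu> i) \<alpha>)"

definition bnd :: "real \<Rightarrow> real \<Rightarrow> nat \<Rightarrow> real" where
  "bnd \<mu> s i = 48 * 2 powr s * 2 powr (\<mu> * (s + 1 - kappa) / 2) * real (Suc i) powr (-(\<mu> * (s + 1 - kappa) / 2))"

lemma wt_nonneg: "0 \<le> wt \<mu> s i" unfolding wt_def by simp

lemma term_bound:
  assumes "0 \<le> \<mu>" "0 \<le> s"
  shows "ennreal (wt \<mu> s i) * emeasure lborel (Eset \<mu> i) \<le> ennreal (bnd \<mu> s i)"
proof (cases "prod_decode i")
  case (Pair p q)
  show ?thesis
  proof (cases "p < q")
    case False
    then show ?thesis using Eset_empty[OF Pair] by simp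
  next
    case True
    let ?t = "\<mu> * (s + 1 - kappa)"
    have q1: "1 \<le> q" using True by simp
    have tpos: "0 \<le> ?t" using assms kappa_lt1 by simp
    have "ennreal (wt \<mu> s i) * emeasure lborel (Eset \<mu> i) \<le>
          ennreal (wt \<mu> s i) * ennreal (48 * real q powr (-(\<mu> * (1 - kappa))))"
      by (intro mult_left_mono Eset_measure[OF Pair True assms(1)]) simp
    also have "\<dots> = ennreal (wt \<mu> s i * (48 * real q powr (-(\<mu> * (1 - kappa)))))"
      using wt_nonneg by (simp add: ennreal_mult)
    also have "\<dots> \<le> ennreal (bnd \<mu> s i)"
    proof (rule ennreal_leI)
      have w0: "(2 * real q powr (-\<mu>)) powr s = 2 powr s * (real q powr (-\<mu>)) powr s"
        by (rule powr_mult)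
      have w: "wt \<mu> s i = 2 powr s * real q powr (-\<mu> * s)"
        by (simp only: wt_def Pair snd_conv w0 powr_powr)
      have "wt \<mu> s i * (48 * real q powr (-(\<mu> * (1 - kappa)))) = 48 * 2 powr s * real q powr (- ?t)"
        unfolding w by (simp add: powr_add[symmetric] algebra_simps)
      also have "real q powr (- ?t) \<le> 2 powr (?t / 2) * real (Suc i) powr (- (?t / 2))"
      proof -
        have i: "i = prod_encode (p, q)" using Pair by (metis prod_decode_inverse)
        have b0: "Suc i \<le> 2 * q^2" using encode_bound[OF True] unfolding i by simp
        have "real (Suc i) \<le> real (2 * q^2)" using b0 by (rule of_nat_mono)
        then have b: "real (Suc i) \<le> 2 * (real q)^2" by simp
        have qq: "(real q)^2 = real q powr 2" using q1 by (simp add: powr_numeral)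
        have "real q powr (- ?t) = (real q powr 2) powr (- (?t/2))"
          by (simp only: powr_powr) simp
        also have "\<dots> = ((real q)^2) powr (- (?t/2))" by (simp only: qq)
        also have "\<dots> \<le> (real (Suc i) / 2) powr (- (?t/2))"
          using b tpos by (intro powr_mono2') auto
        also have "\<dots> = 2 powr (?t / 2) * real (Suc i) powr (- (?t / 2))"
          by (simp add: powr_divide powr_minus divide_simps)
        finally show ?thesis .
      qed
      then have "48 * 2 powr s * real q powr (- ?t) \<le> 48 * 2 powr s * (2 powr (?t / 2) * real (Suc i) powr (- (?t / 2)))"
        by (intro mult_left_mono) auto
      finally show "wt \<mu> s i * (48 * real q powr (-(\<mu> * (1 - kappa)))) \<le> bnd \<mu> s i"
        unfolding bnd_def by (simp add: algebra_simps)
    qed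
    finally show ?thesis .
  qed
qed


declare Eset_sets[measurable]

lemma bnd_summable:
  assumes "\<mu> * (s + 1 - kappa) > 2"
  shows "summable (bnd \<mu> s)"
proof -
  have "summable (\<lambda>n. real n powr (-(\<mu> * (s + 1 - kappa) / 2)))"
    using assms by (subst summable_real_powr_iff) simp
  then have "summable (\<lambda>n. real (Suc n) powr (-(\<mu> * (s + 1 - kappa) / 2)))"
    by (subst summable_Suc_iff)
  then show ?thesis unfolding bnd_def by (intro summable_mult)
qed

lemma Fsum_AE:
  assumes "0 \<le> \<mu>" "0 \<le> s" "\<mu> * (s + 1 - kappa) > 2"
  shows "AE \<alpha> in lborel. Fsum \<mu> s \<alpha> \<noteq> \<infinity>"
  unfolding Fsum_def
proof (rule nn_integral_PInf_AE)
  show "(\<lambda>\<alpha>. \<Sum>i. ennreal (wt \<mu> s i) * indicator (Eset \<mu> i) \<alpha>) \<in> borel_measurable lborel"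
    using Eset_sets by measurable
  have "(\<integral>\<^sup>+ \<alpha>. (\<Sum>i. ennreal (wt \<mu> s i) * indicator (Eset \<mu> i) \<alpha>) \<partial>lborel)
      = (\<Sum>i. \<integral>\<^sup>+ \<alpha>. ennreal (wt \<mu> s i) * indicator (Eset \<mu> i) \<alpha> \<partial>lborel)"
    using Eset_sets by (intro nn_integral_suminf) measurable
  also have "\<dots> = (\<Sum>i. ennreal (wt \<mu> s i) * emeasure lborel (Eset \<mu> i))"
    using Eset_sets by (simp add: nn_integral_cmult_indicator)
  also have "\<dots> \<le> (\<Sum>i. ennreal (bnd \<mu> s i))"
    by (intro suminf_le term_bound assms) auto
  also have "\<dots> = ennreal (\<Sum>i. bnd \<mu> s i)"
    by (rule suminf_ennreal2[OF _ bnd_summable[OF assms(3)]]) (simp add: bnd_def)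
  finally show "(\<integral>\<^sup>+ \<alpha>. (\<Sum>i. ennreal (wt \<mu> s i) * indicator (Eset \<mu> i) \<alpha>) \<partial>lborel) \<noteq> \<infinity>"
    using top.extremum_uniqueI by fastforce
qed


lemma tdist_pos_irrat:
  assumes "\<xi> \<notin> \<rat>" shows "0 < tdist \<xi> (of_int p / of_int q)"
proof (rule ccontr)
  assume "\<not> 0 < tdist \<xi> (of_int p / of_int q)"
  then have "tdist \<xi> (of_int p / of_int q) = 0" using tdist_nonneg[of \<xi> "of_int p / of_int q"] by linarith
  then have "\<xi> = of_int p / of_int q + of_int (round (\<xi> - of_int p / of_int q))"
    unfolding tdist_def by simp
  also have "\<dots> \<in> \<rat>" by (intro Rats_add Rats_divide Rats_of_int)
  finally show False using assms by simp
qed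

definition S2 :: "real \<Rightarrow> (int \<times> int) set" where
  "S2 \<xi> = {(p :: int, q :: int). 0 \<le> p \<and> p < q \<and> coprime p q \<and>
              tdist \<xi> (of_int p / of_int q) < of_int q powr (- 2)}"

lemma dir_one:
  assumes "N > 0"
  shows "\<exists>(p, q)\<in>S2 \<xi>. tdist \<xi> (of_int p / of_int q) < 1 / real N"
proof -
  obtain h k where hk: "coprime h k" "0 < k" "k \<le> int N" "\<bar>of_int k * \<xi> - of_int h\<bar> < 1/N"
    using Dirichlet_approx_coprime[OF assms] by blast
  define p where "p = h mod k"
  have p: "0 \<le> p" "p < k" unfolding p_def using hk(2) by simp_all
  have cp: "coprime p k" unfolding p_def using hk(1,2) by simp
  have kr: "(1::real) \<le> of_int k" "of_int k \<le> real N" using hk(2,3) by linarith+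
  have hdec: "of_int h = of_int k * of_int (h div k) + (of_int p :: real)"
    unfolding p_def by (metis div_mult_mod_eq mult.commute of_int_add of_int_mult)
  have "tdist \<xi> (of_int p / of_int k) \<le> \<bar>\<xi> - of_int p / of_int k - of_int (h div k)\<bar>"
    by (rule tdist_le)
  also have "\<xi> - of_int p / of_int k - of_int (h div k) = (of_int k * \<xi> - of_int h) / of_int k"
    using kr hdec by (simp add: field_simps)
  also have "\<bar>(of_int k * \<xi> - of_int h) / of_int k\<bar> = \<bar>of_int k * \<xi> - of_int h\<bar> / of_int k"
    using kr by simp
  finally have t: "tdist \<xi> (of_int p / of_int k) \<le> \<bar>of_int k * \<xi> - of_int h\<bar> / of_int k" .
  have t2: "\<bar>of_int k * \<xi> - of_int h\<bar> / of_int k < (1 / real N) / of_int k"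
    using hk(4) kr by (intro divide_strict_right_mono) auto
  have "(1 / real N) / of_int k \<le> (1 / of_int k) / of_int k"
    using kr by (intro divide_right_mono) (auto simp: field_simps)
  also have "\<dots> = of_int k powr (-2)" using kr by (simp add: powr_minus powr_numeral power2_eq_square divide_inverse)
  finally have a: "tdist \<xi> (of_int p / of_int k) < of_int k powr (-2)" using t t2 by linarith
  have "(1 / real N) / of_int k \<le> 1 / real N" using kr by (simp add: divide_le_eq_1 field_simps)
  then have b: "tdist \<xi> (of_int p / of_int k) < 1 / real N" using t t2 by linarith
  have "(p, k) \<in> S2 \<xi>" unfolding S2_def using p cp a by simp
  then show ?thesis using b by blast
qed

lemma S2_infinite:
  assumes "\<xi> \<notin> \<rat>" shows "infinite (S2 \<xi>)"
proof
  assume fin: "finite (S2 \<xi>)"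
  let ?f = "\<lambda>pq. tdist \<xi> (of_int (fst pq) / of_int (snd pq))"
  show False
  proof (cases "S2 \<xi> = {}")
    case True
    then show False using dir_one[of 1 \<xi>] by auto
  next
    case False
    define m where "m = Min (?f ` S2 \<xi>)"
    have mpos: "0 < m" unfolding m_def using fin False tdist_pos_irrat[OF assms] by auto
    obtain N :: nat where N: "1 / m < real N" using reals_Archimedean2 by blast
    have Npos: "N > 0" using N mpos by (cases N) (auto simp: field_simps)
    have "1 / real N < m" using N mpos Npos by (simp add: field_simps)
    moreover obtain p q where pq: "(p, q) \<in> S2 \<xi>" "tdist \<xi> (of_int p / of_int q) < 1 / real N"
      using dir_one[OF Npos, of \<xi>] by blast
    moreover have "?f (p, q) \<in> ?f ` S2 \<xi>" using pq(1) by (rule imageI)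
    then have "m \<le> ?f (p, q)" unfolding m_def using fin by (intro Min_le) auto
    ultimately show False by simp
  qed
qed

lemma irr_exp_ge2:
  assumes "\<xi> \<notin> \<rat>" shows "ereal 2 \<le> irr_exp \<xi>"
proof -
  have "ereal 2 \<in> {ereal \<mu> | \<mu>. infinite {(p :: int, q :: int).
              0 \<le> p \<and> p < q \<and> coprime p q \<and>
              tdist \<xi> (of_int p / of_int q) < of_int q powr (- \<mu>)}}"
    using S2_infinite[OF assms] unfolding S2_def by blast
  then show ?thesis unfolding irr_exp_def using assms by (auto intro: Sup_upper)
qed


lemma pairs_unbounded:
  assumes "infinite T" "T \<subseteq> {(p, q). 0 \<le> p \<and> p < (q::int)}"
  shows "\<exists>(p, q)\<in>T. Q \<le> q"
proof (rule ccontr)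
  assume "\<not> ?thesis"
  then have "T \<subseteq> {0..Q} \<times> {0..Q}" using assms(2) by fastforce
  then have "finite T" by (rule finite_subset) simp
  then show False using assms(1) by simp
qed

lemma irr_exp_gt:
  assumes "\<xi> \<notin> \<rat>" "ereal \<mu> < irr_exp \<xi>"
  shows "\<exists>p q::nat. p < q \<and> Q \<le> q \<and> tdist \<xi> (real p / real q) < real q powr (-\<mu>)"
proof -
  obtain y where y: "y \<in> {ereal \<mu> | \<mu>. infinite {(p :: int, q :: int).
              0 \<le> p \<and> p < q \<and> coprime p q \<and>
              tdist \<xi> (of_int p / of_int q) < of_int q powr (- \<mu>)}}" "ereal \<mu> < y"
    using assms unfolding irr_exp_def by (auto simp: less_Sup_iff)
  then obtain \<mu>' where m': "y = ereal \<mu>'" and inf: "infinite {(p :: int, q :: int).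
              0 \<le> p \<and> p < q \<and> coprime p q \<and>
              tdist \<xi> (of_int p / of_int q) < of_int q powr (- \<mu>')}" by blast
  have lt: "\<mu> < \<mu>'" using y(2) m' by simp
  obtain p q where pq: "0 \<le> p" "p < q" "tdist \<xi> (of_int p / of_int q) < of_int q powr (- \<mu>')"
     "int Q \<le> q"
    using pairs_unbounded[OF inf, of "int Q"] by auto
  have q1: "(1::real) \<le> of_int q" using pq by linarith
  have "of_int q powr (- \<mu>') \<le> (of_int q :: real) powr (- \<mu>)"
    using lt q1 by (intro powr_mono) auto
  moreover have "real (nat p) = of_int p" "real (nat q) = of_int q" using pq by auto
  ultimately have "nat p < nat q \<and> Q \<le> nat q \<and> tdist \<xi> (real (nat p) / real (nat q)) < real (nat q) powr (-\<mu>)"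
    using pq by auto
  then show ?thesis by blast
qed

lemma tdiam_bound:
  assumes "c \<in> U" "\<And>x y. x \<in> U \<Longrightarrow> y \<in> U \<Longrightarrow> tdist x y \<le> B"
  shows "0 \<le> tdiam U" "tdiam U \<le> B"
proof -
  let ?D = "{tdist x y | x y. x \<in> U \<and> y \<in> U}"
  have ne: "?D \<noteq> {}" using assms(1) by blast
  have bdd: "bdd_above ?D" using tdist_half by (auto intro!: bdd_aboveI[of _ "1/2"])
  have U: "U \<noteq> {}" using assms(1) by blast
  have "tdist c c \<in> ?D" using assms(1) by blast
  then have "tdist c c \<le> Sup ?D" using bdd by (rule cSup_upper)
  then show "0 \<le> tdiam U" unfolding tdiam_def using U tdist_nonneg[of c c] by simp
  have "Sup ?D \<le> B" using ne assms(2) by (intro cSup_least) auto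
  then show "tdiam U \<le> B" unfolding tdiam_def using U by simp
qed

lemma tdiam_ball:
  assumes "0 < r"
  shows "0 \<le> tdiam {x. tdist x c < r}" "tdiam {x. tdist x c < r} \<le> 2 * r"
proof -
  have c: "c \<in> {x. tdist x c < r}" using assms by (simp add: tdist_def)
  have b: "tdist x y \<le> 2 * r" if "x \<in> {x. tdist x c < r}" "y \<in> {x. tdist x c < r}" for x y
    using tdist_triangle[of x y c] tdist_sym[of y c] that by simp
  show "0 \<le> tdiam {x. tdist x c < r}" "tdiam {x. tdist x c < r} \<le> 2 * r"
    using tdiam_bound[OF c b] by auto
qed


lemma rot_in_Eset:
  assumes "\<alpha> \<in> {0..<1}" "\<xi> \<in> rot \<alpha> cantorK" "p < q" "0 \<le> \<mu>"
    "tdist \<xi> (real p / real q) < real q powr (-\<mu>)"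
  shows "\<alpha> \<in> Eset \<mu> (prod_encode (p, q))"
proof -
  obtain c where c: "c \<in> Cset (nn \<mu> q)" "tdist \<alpha> (real p / real q - c) < real q powr (-\<mu>) + 1 / 3 ^ nn \<mu> q"
    using rot_cantor_approx[OF assms(2,5)] by blast
  show ?thesis using c unfolding rho_def[symmetric] by (intro Eset_mem assms) 
qed

lemma Fsum_summable:
  assumes "Fsum \<mu> s \<alpha> \<noteq> \<infinity>"
  shows "summable (\<lambda>i. wt \<mu> s i * indicator (Eset \<mu> i) \<alpha>)"
proof (rule summable_suminf_not_top)
  show "0 \<le> wt \<mu> s i * indicator (Eset \<mu> i) \<alpha>" for i using wt_nonneg by simp
  have "(\<Sum>i. ennreal (wt \<mu> s i * indicator (Eset \<mu> i) \<alpha>)) = Fsum \<mu> s \<alpha>"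
    unfolding Fsum_def by (intro suminf_cong) (simp split: split_indicator)
  then show "(\<Sum>i. ennreal (wt \<mu> s i * indicator (Eset \<mu> i) \<alpha>)) \<noteq> top" using assms by simp
qed


lemma hm_zero:
  assumes mu: "0 < \<mu>" and s: "0 < s" and F: "Fsum \<mu> s \<alpha> \<noteq> \<infinity>"
    and cov: "\<And>\<xi> Q. \<xi> \<in> A \<Longrightarrow> \<exists>p q::nat. p < q \<and> Q \<le> q \<and> \<alpha> \<in> Eset \<mu> (prod_encode (p, q)) \<and>
                tdist \<xi> (real p / real q) < real q powr (-\<mu>)"
  shows "hausdorff_meas s A = 0"
proof -
  define f where "f = (\<lambda>i. wt \<mu> s i * indicator (Eset \<mu> i) \<alpha>)"
  have sf: "summable f" unfolding f_def by (rule Fsum_summable[OF F])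
  have f0: "0 \<le> f i" for i unfolding f_def using wt_nonneg by simp
  have "(INF U\<in>{U :: nat \<Rightarrow> real set. A \<subseteq> (\<Union>i. U i) \<and> (\<forall>i. tdiam (U i) \<le> \<delta>)}.
        (\<Sum>i. ennreal (tdiam (U i) powr s))) \<le> 0" if dpos: "\<delta> \<in> {0<..}" for \<delta>
  proof (rule ennreal_le_epsilon)
    fix e :: real assume epos: "0 < e"
    obtain N1 where N1: "\<forall>n\<ge>N1. norm (\<Sum>i. f (i + n)) < e" using suminf_exist_split[OF epos sf] by blast
    obtain N2 :: nat where N2: "(2/\<delta>) powr (1/\<mu>) < real N2" using reals_Archimedean2 by blast
    define Q where "Q = max (max N1 N2) 1"
    have small: "2 * real q powr (-\<mu>) < \<delta>" if "Q \<le> q" for q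
    proof -
      have d: "0 < \<delta>" using dpos by simp
      have "(2/\<delta>) powr (1/\<mu>) < real q" using N2 that unfolding Q_def by linarith
      then have "((2/\<delta>) powr (1/\<mu>)) powr \<mu> < real q powr \<mu>"
        using mu by (intro powr_less_mono2) auto
      also have "((2/\<delta>) powr (1/\<mu>)) powr \<mu> = 2 / \<delta>" using mu d by (simp add: powr_powr)
      finally have "2 / \<delta> < real q powr \<mu>" .
      then have "2 < \<delta> * real q powr \<mu>" using d by (simp add: field_simps)
      moreover have "0 < real q powr \<mu>" using that unfolding Q_def by simp
      ultimately show ?thesis by (simp add: powr_minus field_simps)
    qed
    define U where "U = (\<lambda>i. case prod_decode i of (p, q) \<Rightarrow>
        if p < q \<and> Q \<le> q \<and> \<alpha> \<in> Eset \<mu> i then {x. tdist x (real p / real q) < real q powr (-\<mu>)} else {})"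
    define g where "g = (\<lambda>i. if Q \<le> i then f i else 0)"
    have cover: "A \<subseteq> (\<Union>i. U i)"
    proof
      fix \<xi> assume "\<xi> \<in> A"
      then obtain p q :: nat where pq: "p < q" "Q \<le> q" "\<alpha> \<in> Eset \<mu> (prod_encode (p, q))"
         "tdist \<xi> (real p / real q) < real q powr (-\<mu>)" using cov by blast
      then have "\<xi> \<in> U (prod_encode (p, q))" unfolding U_def by simp
      then show "\<xi> \<in> (\<Union>i. U i)" by blast
    qed
    have diam: "tdiam (U i) \<le> \<delta>" and trm: "tdiam (U i) powr s \<le> g i" for i
    proof -
      obtain p q where pq: "prod_decode i = (p, q)" by (cases "prod_decode i")
      show "tdiam (U i) \<le> \<delta>" "tdiam (U i) powr s \<le> g i"
      proof (atomize(full), cases "p < q \<and> Q \<le> q \<and> \<alpha> \<in> Eset \<mu> i")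
        case True
        have q1: "0 < q" using True by simp
        have rpos: "0 < real q powr (-\<mu>)" using q1 by simp
        have U: "U i = {x. tdist x (real p / real q) < real q powr (-\<mu>)}" unfolding U_def pq using True by simp
        have t: "0 \<le> tdiam (U i)" "tdiam (U i) \<le> 2 * real q powr (-\<mu>)" unfolding U using tdiam_ball[OF rpos] by auto
        have ii: "i = prod_encode (p, q)" using pq by (metis prod_decode_inverse)
        have "q \<le> i" unfolding ii by (rule le_prod_encode_2)
        then have iQ: "Q \<le> i" using True by linarith
        have "tdiam (U i) powr s \<le> (2 * real q powr (-\<mu>)) powr s" using t s by (intro powr_mono2) auto
        also have "\<dots> = f i" unfolding f_def wt_def pq using True by simp
        also have "\<dots> = g i" unfolding g_def using iQ by simp
        finally show "tdiam (U i) \<le> \<delta> \<and> tdiam (U i) powr s \<le> g i" using t small[of q] True by simp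
      next
        case False
        have U: "U i = {}" unfolding U_def pq using False by auto
        show "tdiam (U i) \<le> \<delta> \<and> tdiam (U i) powr s \<le> g i"
          unfolding U g_def tdiam_def using dpos f0 by simp
      qed
    qed
    have sg: "summable g"
      by (rule summable_comparison_test'[OF sf, of 0]) (simp add: g_def f0)
    have c1: "(INF U\<in>{U :: nat \<Rightarrow> real set. A \<subseteq> (\<Union>i. U i) \<and> (\<forall>i. tdiam (U i) \<le> \<delta>)}.
        (\<Sum>i. ennreal (tdiam (U i) powr s))) \<le> (\<Sum>i. ennreal (tdiam (U i) powr s))"
      using cover diam by (intro INF_lower) auto
    have c2: "(\<Sum>i. ennreal (tdiam (U i) powr s)) \<le> (\<Sum>i. ennreal (g i))"
      by (rule suminf_le) (auto intro: ennreal_leI trm)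
    have c3: "(\<Sum>i. ennreal (g i)) = ennreal (\<Sum>i. g i)"
      by (rule suminf_ennreal2[OF _ sg]) (simp add: g_def f0)
    have c4: "(\<Sum>i. g i) = (\<Sum>i. f (i + Q))"
    proof -
      have "(\<Sum>i. g i) = (\<Sum>i. g (i + Q)) + sum g {..<Q}" by (rule suminf_split_initial_segment[OF sg])
      also have "sum g {..<Q} = 0" unfolding g_def by simp
      also have "(\<lambda>i. g (i + Q)) = (\<lambda>i. f (i + Q))" unfolding g_def by auto
      finally show ?thesis by simp
    qed
    have c5: "(\<Sum>i. f (i + Q)) \<le> e"
    proof -
      have "Q \<ge> N1" unfolding Q_def by simp
      then have "norm (\<Sum>i. f (i + Q)) < e" using N1 by blast
      moreover have "(\<Sum>i. f (i + Q)) \<le> norm (\<Sum>i. f (i + Q))" by simp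
      ultimately show ?thesis by linarith
    qed
    have "ennreal (\<Sum>i. g i) \<le> ennreal e" unfolding c4 using c5 by (rule ennreal_leI)
    then show "(INF U\<in>{U :: nat \<Rightarrow> real set. A \<subseteq> (\<Union>i. U i) \<and> (\<forall>i. tdiam (U i) \<le> \<delta>)}.
        (\<Sum>i. ennreal (tdiam (U i) powr s))) \<le> 0 + ennreal e"
      using c1 c2 c3 by simp
  qed
  then have "hausdorff_meas s A \<le> 0" unfolding hausdorff_meas_def by (intro SUP_least) auto
  then show ?thesis by simp
qed


definition Pgood :: "real \<Rightarrow> bool" where
  "Pgood \<alpha> = (\<forall>rt :: rat \<times> rat. (0 < real_of_rat (fst rt) \<and> 0 \<le> real_of_rat (snd rt) \<and>
       real_of_rat (fst rt) * (real_of_rat (snd rt) + 1 - kappa) > 2) \<longrightarrow>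
       Fsum (real_of_rat (fst rt)) (real_of_rat (snd rt)) \<alpha> \<noteq> \<infinity>)"

lemma Pgood_AE: "AE \<alpha> in lborel. Pgood \<alpha>"
  unfolding Pgood_def
proof (subst AE_all_countable, intro allI)
  fix rt :: "rat \<times> rat"
  show "AE \<alpha> in lborel. (0 < real_of_rat (fst rt) \<and> 0 \<le> real_of_rat (snd rt) \<and>
       real_of_rat (fst rt) * (real_of_rat (snd rt) + 1 - kappa) > 2) \<longrightarrow>
       Fsum (real_of_rat (fst rt)) (real_of_rat (snd rt)) \<alpha> \<noteq> \<infinity>"
  proof (cases "0 < real_of_rat (fst rt) \<and> 0 \<le> real_of_rat (snd rt) \<and>
       real_of_rat (fst rt) * (real_of_rat (snd rt) + 1 - kappa) > 2")
    case True
    then have "AE \<alpha> in lborel. Fsum (real_of_rat (fst rt)) (real_of_rat (snd rt)) \<alpha> \<noteq> \<infinity>"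
      by (intro Fsum_AE) auto
    then show ?thesis by (rule AE_mp) simp
  next
    case False then show ?thesis by (intro AE_I2 impI) blast
  qed
qed

lemma Pgood_use:
  assumes "Pgood \<alpha>" "r \<in> \<rat>" "t \<in> \<rat>" "0 < r" "0 \<le> t" "r * (t + 1 - kappa) > 2"
  shows "Fsum r t \<alpha> \<noteq> \<infinity>"
proof -
  obtain r' where r': "r = of_rat r'" using assms(2) Rats_cases by blast
  obtain t' where t': "t = of_rat t'" using assms(3) Rats_cases by blast
  show ?thesis using assms(1,4,5,6) unfolding Pgood_def r' t'
    by (auto dest!: spec[of _ "(r', t')"])
qed

lemma wt_zero: "p < q \<Longrightarrow> wt \<mu> 0 (prod_encode (p, q)) = 1"
  unfolding wt_def by simp

lemma part1:
  assumes a: "\<alpha> \<in> {0..<1}" and P: "Pgood \<alpha>" and xi: "\<xi> \<in> rot \<alpha> cantorK" "\<xi> \<notin> \<rat>"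
  shows "irr_exp \<xi> \<le> ereal (2 / (1 - kappa))"
proof (rule ccontr)
  assume "\<not> ?thesis"
  then have "ereal (2 / (1 - kappa)) < irr_exp \<xi>" by simp
  then obtain z where z: "2 / (1 - kappa) < z" "ereal z < irr_exp \<xi>" using ereal_dense2 by force
  obtain r where r: "r \<in> \<rat>" "2 / (1 - kappa) < r" "r < z" using Rats_dense_in_real[OF z(1)] by blast
  have k: "0 < 1 - kappa" using kappa_lt1 by simp
  have rpos: "0 < r" using r(2) k by (smt (verit) divide_pos_pos)
  have r2: "r * (0 + 1 - kappa) > 2" using r(2) k by (simp add: divide_less_eq)
  have "ereal r < ereal z" using r(3) by simp
  then have rlt: "ereal r < irr_exp \<xi>" using z(2) by (rule less_trans)
  have F: "Fsum r 0 \<alpha> \<noteq> \<infinity>" using Pgood_use[OF P r(1) _ rpos _ r2] by simp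
  define f where "f = (\<lambda>i. wt r 0 i * indicator (Eset r i) \<alpha>)"
  have "summable f" unfolding f_def by (rule Fsum_summable[OF F])
  then have "f \<longlonglongrightarrow> 0" by (rule summable_LIMSEQ_zero)
  then have "eventually (\<lambda>i. f i < 1) sequentially" by (rule order_tendstoD) simp
  then obtain N where N: "\<And>i. i \<ge> N \<Longrightarrow> f i < 1" unfolding eventually_sequentially by blast
  obtain p q :: nat where pq: "p < q" "N \<le> q" "tdist \<xi> (real p / real q) < real q powr (-r)"
    using irr_exp_gt[OF xi(2) rlt] by blast
  have E: "\<alpha> \<in> Eset r (prod_encode (p, q))" using rot_in_Eset[OF a xi(1) pq(1) _ pq(3)] rpos by simp
  have "q \<le> prod_encode (p, q)" by (rule le_prod_encode_2)
  then have "f (prod_encode (p, q)) < 1" using N pq(2) by simp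
  moreover have "f (prod_encode (p, q)) = 1" unfolding f_def using E wt_zero[OF pq(1)] by simp
  ultimately show False by simp
qed

lemma part2:
  assumes a: "\<alpha> \<in> {0..<1}" and P: "Pgood \<alpha>" and mu: "2 \<le> \<mu>" "\<mu> \<le> 2 / (1 - kappa)"
  shows "hdim (Mset \<mu> \<inter> rot \<alpha> cantorK) \<le> ereal (2 / \<mu> + kappa - 1)"
proof -
  define A where "A = Mset \<mu> \<inter> rot \<alpha> cantorK"
  define b where "b = 2 / \<mu> + kappa - 1"
  define S where "S = {s::real. s > 0 \<and> hausdorff_meas s A = 0}"
  have k: "0 < 1 - kappa" using kappa_lt1 by simp
  have mupos: "0 < \<mu>" using mu by simp
  have "\<mu> * (1 - kappa) \<le> 2" using mu(2) k by (simp add: le_divide_eq)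
  then have "1 - kappa \<le> 2 / \<mu>" using mupos by (simp add: le_divide_eq mult.commute)
  then have b0: "0 \<le> b" unfolding b_def by simp
  have key: "s \<in> S" if s: "s \<in> \<rat>" "b < s" for s
  proof -
    have spos: "0 < s" using s b0 by simp
    have sk: "0 < s + 1 - kappa" using spos k by simp
    have "2 / \<mu> < s + 1 - kappa" using s(2) unfolding b_def by simp
    then have "2 < \<mu> * (s + 1 - kappa)" using mupos by (simp add: divide_less_eq mult.commute)
    then have lt: "2 / (s + 1 - kappa) < \<mu>" using sk by (simp add: divide_less_eq mult.commute)
    obtain m where m: "m \<in> \<rat>" "2 / (s + 1 - kappa) < m" "m < \<mu>" using Rats_dense_in_real[OF lt] by blast
    have mpos: "0 < m" using m(2) sk by (smt (verit) divide_pos_pos)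
    have m2: "m * (s + 1 - kappa) > 2" using m(2) sk by (simp add: divide_less_eq)
    have F: "Fsum m s \<alpha> \<noteq> \<infinity>" using Pgood_use[OF P m(1) s(1) mpos _ m2] spos by simp
    have "hausdorff_meas s A = 0"
    proof (rule hm_zero[OF mpos spos F])
      fix \<xi> Q assume "\<xi> \<in> A"
      then have xi: "\<xi> \<in> rot \<alpha> cantorK" "ereal \<mu> \<le> irr_exp \<xi>" unfolding A_def Mset_def by auto
      have nq: "\<xi> \<notin> \<rat>"
      proof
        assume "\<xi> \<in> \<rat>"
        then have "irr_exp \<xi> = 1" unfolding irr_exp_def by simp
        then show False using xi(2) mu(1) by simp
      qed
      have "ereal m < ereal \<mu>" using m(3) by simp
      then have "ereal m < irr_exp \<xi>" using xi(2) by (rule less_le_trans)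
      then obtain p q :: nat where pq: "p < q" "Q \<le> q" "tdist \<xi> (real p / real q) < real q powr (-m)"
        using irr_exp_gt[OF nq] by blast
      have "\<alpha> \<in> Eset m (prod_encode (p, q))" using rot_in_Eset[OF a xi(1) pq(1) _ pq(3)] mpos by simp
      then show "\<exists>p q::nat. p < q \<and> Q \<le> q \<and> \<alpha> \<in> Eset m (prod_encode (p, q)) \<and>
                tdist \<xi> (real p / real q) < real q powr (-m)" using pq by blast
    qed
    then show ?thesis unfolding S_def using spos by simp
  qed
  show ?thesis
  proof (cases "A = {}")
    case True
    then show ?thesis unfolding A_def[symmetric] hdim_def by simp
  next
    case False
    have "Inf S \<le> b"
    proof (rule ccontr)
      assume "\<not> Inf S \<le> b"
      then have "b < Inf S" by simp
      then obtain s where s: "s \<in> \<rat>" "b < s" "s < Inf S" using Rats_dense_in_real by blast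
      have "s \<in> S" using key[OF s(1,2)] .
      moreover have "bdd_below S" unfolding S_def by (auto intro!: bdd_belowI[of _ 0])
      ultimately have "Inf S \<le> s" by (rule cInf_lower)
      then show False using s(3) by simp
    qed
    then show ?thesis using False unfolding A_def[symmetric] hdim_def S_def b_def by simp
  qed
qed

theorem theorem2p1:
  shows "AE \<alpha> in lborel. \<alpha> \<in> {0..<1} \<longrightarrow>
     ((\<forall>\<xi>\<in>rot \<alpha> cantorK. \<xi> \<notin> \<rat> \<longrightarrow>
         ereal 2 \<le> irr_exp \<xi> \<and> irr_exp \<xi> \<le> ereal (2 / (1 - kappa))) \<and>
      (\<forall>\<mu>::real. 2 \<le> \<mu> \<and> \<mu> \<le> 2 / (1 - kappa) \<longrightarrow>
         hdim (Mset \<mu> \<inter> rot \<alpha> cantorK) \<le> ereal (2 / \<mu> + kappa - 1)))"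
  using Pgood_AE
proof (rule AE_mp, intro AE_I2 impI conjI ballI allI)
  fix \<alpha> \<xi> assume "Pgood \<alpha>" "\<alpha> \<in> {0..<1}" "\<xi> \<in> rot \<alpha> cantorK" "\<xi> \<notin> \<rat>"
  then show "ereal 2 \<le> irr_exp \<xi>" "irr_exp \<xi> \<le> ereal (2 / (1 - kappa))"
    using irr_exp_ge2 part1 by auto
next
  fix \<alpha> \<mu> assume "Pgood \<alpha>" "\<alpha> \<in> {0..<1}" "2 \<le> \<mu> \<and> \<mu> \<le> 2 / (1 - kappa)"
  then show "hdim (Mset \<mu> \<inter> rot \<alpha> cantorK) \<le> ereal (2 / \<mu> + kappa - 1)"
    using part2 by auto
qed


end
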